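(* Let $f:\mathbb{R}\to\mathbb{R}$ be a function, let $I\subset\mathbb{R}$ be an interval, and let $\Phi$ be a Young function satisfying the $\nabla_2$-condition. If there exists $D>0$ such that \[ |f(x)-f(y)|\le\left\{\Phi\left(\frac{1}{D|x-y|}\right)\right\}^{-1} \] for all $x,y\in I$ with $x\neq y$, then $f$ is constant on $I$.
   Context: A Young function is a map $\Phi:[0,\infty)\to[0,\infty)$ that is positive on $(0,\infty)$, convex, with $\lim_{t\downarrow0}\Phi(t)=\Phi(0)=0$. $\Phi$ satisfies the $\nabla_2$-condition if there is a constant $k>1$ with $\Phi(t)\le\frac{1}{2k}\Phi(kt)$ for all $t>0$. *)

theory Defs
  imports "HOL-Analysis.Analysis"
begin

text \<open>Young function: a map [0,\<infinity>) \<rightarrow> [0,\<infinity>), positive on (0,\<infinity>), convex,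
  with Phi(0) = 0 and Phi(t) \<rightarrow> 0 as t decreases to 0.
  Represented as a function real \<Rightarrow> real; only its values on [0,\<infinity>) matter.\<close>
definition young_function :: "(real \<Rightarrow> real) \<Rightarrow> bool" where
  "young_function \<Phi> \<longleftrightarrow>
     (\<forall>t\<ge>0. \<Phi> t \<ge> 0) \<and>
     (\<forall>t>0. \<Phi> t > 0) \<and>
     convex_on {0..} \<Phi> \<and>
     \<Phi> 0 = 0 \<and>
     (\<Phi> \<longlongrightarrow> 0) (at_right 0)"

definition nabla2_condition :: "(real \<Rightarrow> real) \<Rightarrow> bool" where
  "nabla2_condition \<Phi> \<longleftrightarrow>
     (\<exists>k>1. \<forall>t>0. \<Phi> t \<le> \<Phi> (k * t) / (2 * k))"

end

theory Submission
  imports Defs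
begin

lemma ratio_mono:
  fixes \<Phi> :: "real \<Rightarrow> real"
  assumes "young_function \<Phi>" "0 < s" "s \<le> t"
  shows "\<Phi> s / s \<le> \<Phi> t / t"
proof -
  have cv: "convex_on {0..} \<Phi>" and z: "\<Phi> 0 = 0" using assms(1) by (auto simp: young_function_def)
  have "\<Phi> ((1 - s/t) *\<^sub>R 0 + (s/t) *\<^sub>R t) \<le> (1 - s/t) * \<Phi> 0 + (s/t) * \<Phi> t"
    using assms(2,3) by (intro convex_onD[OF cv]) auto
  hence "\<Phi> s \<le> (s/t) * \<Phi> t" using assms(2,3) z by simp
  thus ?thesis using assms(2,3) by (simp add: field_simps)
qed

lemma ratio_pow:
  fixes \<Phi> :: "real \<Rightarrow> real"
  assumes k: "k > 1" and h: "\<forall>t>0. \<Phi> t \<le> \<Phi> (k * t) / (2 * k)" and "t > 0"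
  shows "2 ^ m * (\<Phi> t / t) \<le> \<Phi> (k ^ m * t) / (k ^ m * t)"
proof (induction m)
  case 0 thus ?case by simp
next
  case (Suc m)
  have p: "k ^ m * t > 0" using k assms(3) by simp
  have "\<Phi> (k ^ m * t) \<le> \<Phi> (k * (k ^ m * t)) / (2 * k)" using h p by blast
  hence "2 * (\<Phi> (k ^ m * t) / (k ^ m * t)) \<le> \<Phi> (k ^ Suc m * t) / (k ^ Suc m * t)"
    using p k assms(3) by (simp add: field_simps)
  thus ?case using Suc by simp
qed

lemma ratio_unbounded:
  fixes \<Phi> :: "real \<Rightarrow> real"
  assumes y: "young_function \<Phi>" and n: "nabla2_condition \<Phi>"
  shows "\<exists>T>0. \<forall>t\<ge>T. \<Phi> t / t \<ge> M"
proof -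
  obtain k where k: "k > 1" and h: "\<forall>t>0. \<Phi> t \<le> \<Phi> (k * t) / (2 * k)"
    using n by (auto simp: nabla2_condition_def)
  have p1: "\<Phi> 1 > 0" using y by (auto simp: young_function_def)
  obtain m where m: "M / \<Phi> 1 < 2 ^ m" using real_arch_pow[of 2 "M / \<Phi> 1"] by auto
  have "M \<le> 2 ^ m * \<Phi> 1" using m p1 by (simp add: field_simps)
  also have "\<dots> \<le> \<Phi> (k ^ m) / k ^ m" using ratio_pow[OF k h, of 1 m] by simp
  finally have M: "M \<le> \<Phi> (k ^ m) / k ^ m" .
  have kp: "k ^ m > 0" using k by simp
  show ?thesis
  proof (intro exI[of _ "k ^ m"] conjI allI impI kp)
    fix t assume "k ^ m \<le> t"
    thus "M \<le> \<Phi> t / t" using ratio_mono[OF y kp] M by force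
  qed
qed

lemma pair_eq:
  fixes f :: "real \<Rightarrow> real" and I :: "real set" and \<Phi> :: "real \<Rightarrow> real"
  assumes I: "is_interval I"
    and y: "young_function \<Phi>"
    and n: "nabla2_condition \<Phi>"
    and D: "D > 0"
    and b: "\<forall>x\<in>I. \<forall>y\<in>I. x \<noteq> y \<longrightarrow> \<bar>f x - f y\<bar> \<le> inverse (\<Phi> (1 / (D * \<bar>x - y\<bar>)))"
    and xy: "x \<in> I" "z \<in> I" "x < z"
  shows "f x = f z"
proof -
  define L where "L = z - x"
  have L: "L > 0" using xy by (simp add: L_def)
  have key: "\<bar>f z - f x\<bar> \<le> e" if e: "e > 0" for e
  proof -
    obtain T where T: "T > 0" "\<forall>t\<ge>T. \<Phi> t / t \<ge> D * L / e"
      using ratio_unbounded[OF y n] by blast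
    obtain N :: nat where N: "T * D * L < real N" using reals_Archimedean2 by blast
    have Npos: "N > 0" using N T D L
      by (metis mult_pos_pos not_gr0 of_nat_0 order_less_asym)
    define h where "h = L / N"
    have hp: "h > 0" using L Npos by (simp add: h_def)
    define p where "p i = x + real i * h" for i :: nat
    have pI: "p i \<in> I" if "i \<le> N" for i
    proof -
      have "real i * h \<le> real N * h" using that hp by (simp add: mult_right_mono)
      hence "p i \<le> z" using Npos by (simp add: p_def h_def L_def)
      moreover have "x \<le> p i" using hp by (simp add: p_def)
      ultimately show ?thesis using I xy unfolding is_interval_1 by blast
    qed
    define t where "t = 1 / (D * h)"
    have tT: "t \<ge> T"
    proof -
      have "t = real N / (D * L)" using Npos L D by (simp add: t_def h_def)
      hence "(D * L) * T < (D * L) * t" using N D L by (simp add: field_simps)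
      thus ?thesis using D L by (simp add: mult_less_cancel_left_pos)
    qed
    have tp: "t > 0" using tT T by simp
    have Pt: "\<Phi> t > 0" using y tp by (auto simp: young_function_def)
    have gt: "\<Phi> t / t \<ge> D * L / e" using T tT by blast
    have step: "\<bar>f (p (Suc i)) - f (p i)\<bar> \<le> inverse (\<Phi> t)" if "i < N" for i
    proof -
      have "p (Suc i) - p i = h" by (simp add: p_def algebra_simps)
      hence "\<bar>p (Suc i) - p i\<bar> = h" using hp by simp
      thus ?thesis using b pI[of i] pI[of "Suc i"] that hp unfolding t_def
        by (metis Suc_leI less_imp_le_nat less_irrefl diff_self abs_zero)
    qed
    have pN: "p N = z" "p 0 = x" using Npos by (simp_all add: p_def h_def L_def)
    have "f z - f x = (\<Sum>i<N. f (p (Suc i)) - f (p i))"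
      using sum_lessThan_telescope[of "\<lambda>i. f (p i)" N] pN by simp
    hence "\<bar>f z - f x\<bar> \<le> (\<Sum>i<N. \<bar>f (p (Suc i)) - f (p i)\<bar>)"
      by (metis sum_abs)
    also have "\<dots> \<le> real N * inverse (\<Phi> t)"
      using sum_bounded_above[of "{..<N}" "\<lambda>i. \<bar>f (p (Suc i)) - f (p i)\<bar>" "inverse (\<Phi> t)"] step
      by simp
    also have "real N * inverse (\<Phi> t) = D * L / (\<Phi> t / t)"
      using Npos L D hp Pt by (simp add: t_def h_def field_simps)
    also have "\<dots> \<le> e"
    proof -
      have "D * L / e > 0" using D L e by simp
      hence "\<Phi> t / t > 0" using gt by linarith
      moreover have "D * L \<le> e * (\<Phi> t / t)" using gt e by (simp add: pos_divide_le_eq mult.commute)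
      ultimately show ?thesis by (meson pos_divide_le_eq)
    qed
    finally show ?thesis .
  qed
  have "\<bar>f z - f x\<bar> \<le> 0"
    by (metis key dense not_le abs_ge_zero order.strict_trans2)
  thus ?thesis by simp
qed

theorem lemma5p4:
  fixes f :: "real \<Rightarrow> real" and I :: "real set" and \<Phi> :: "real \<Rightarrow> real"
  assumes "is_interval I"
    and "young_function \<Phi>"
    and "nabla2_condition \<Phi>"
    and "\<exists>D>0. \<forall>x\<in>I. \<forall>y\<in>I. x \<noteq> y \<longrightarrow>
           \<bar>f x - f y\<bar> \<le> inverse (\<Phi> (1 / (D * \<bar>x - y\<bar>)))"
  shows "\<exists>c. \<forall>x\<in>I. f x = c"
proof (cases "I = {}")
  case True thus ?thesis by simp
next
  case False
  then obtain a where a: "a \<in> I" by blast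
  obtain D where D: "D > 0" and b: "\<forall>x\<in>I. \<forall>y\<in>I. x \<noteq> y \<longrightarrow>
           \<bar>f x - f y\<bar> \<le> inverse (\<Phi> (1 / (D * \<bar>x - y\<bar>)))" using assms(4) by blast
  have "f x = f a" if x: "x \<in> I" for x
  proof (cases x a rule: linorder_cases)
    case less thus ?thesis using pair_eq[OF assms(1-3) D b x a] by simp
  next
    case equal thus ?thesis by simp
  next
    case greater thus ?thesis using pair_eq[OF assms(1-3) D b a x] by simp
  qed
  thus ?thesis by blast
qed

end
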